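(* Let $(x_n)$ be a nonincreasing interval-filling sequence of positive reals with cardinal function $f$, and suppose $r_k>x_k$ for some $k\in\mathbb{N}$. Then there exists $x\in\mathcal{A}((x_n))$ with $f(x)\ge3$ (with $\omega,\mathfrak{c}$ counting as $\ge3$).
   Context: For a summable sequence $\mathbf{x}=(x_n)$ of positive reals, $\mathcal{A}(\mathbf{x})=\{\sum_{n\in A}x_n: A\subseteq\mathbb{N}\}$ is its achievement set and its cardinal function $f$ assigns to $x\in\mathcal{A}(\mathbf{x})$ the cardinality (a positive integer, $\omega$, or $\mathfrak{c}$) of $\{(\varepsilon_n)\in\{0,1\}^{\mathbb{N}}:\sum\varepsilon_nx_n=x\}$. The sequence is interval-filling if $\mathcal{A}(\mathbf{x})$ is an interval. The tail sums are $r_n=\sum_{k=n+1}^\infty x_k$. *)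

theory Defs
  imports "HOL-Analysis.Analysis"
begin

text \<open>Sequences are indexed from 0 (the paper indexes from 1; this is a harmless shift).
  A 0-1 sequence is encoded as a predicate e :: nat \<Rightarrow> bool.\<close>

definition subsum :: "(nat \<Rightarrow> real) \<Rightarrow> (nat \<Rightarrow> bool) \<Rightarrow> real" where
  "subsum x e = (\<Sum>n. if e n then x n else 0)"

definition achievement_set :: "(nat \<Rightarrow> real) \<Rightarrow> real set" where
  "achievement_set x = {subsum x e | e. True}"

text \<open>The set of 0-1 representations of a point; the cardinal function f(s) is its cardinality.\<close>
definition representations :: "(nat \<Rightarrow> real) \<Rightarrow> real \<Rightarrow> (nat \<Rightarrow> bool) set" where
  "representations x s = {e. subsum x e = s}"

definition interval_filling :: "(nat \<Rightarrow> real) \<Rightarrow> bool" where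
  "interval_filling x \<longleftrightarrow> is_interval (achievement_set x)"

definition tail_sum :: "(nat \<Rightarrow> real) \<Rightarrow> nat \<Rightarrow> real" where
  "tail_sum x k = (\<Sum>j. x (j + k + 1))"

end

theory Submission
  imports Defs
begin

lemma tail_eq:
  assumes "summable x"
  shows "tail_sum x n = suminf x - (\<Sum>i<Suc n. x i)"
proof -
  have "tail_sum x n = (\<Sum>j. x (j + Suc n))" unfolding tail_sum_def by simp
  also have "\<dots> = suminf x - (\<Sum>i<Suc n. x i)" using suminf_minus_initial_segment[OF assms] .
  finally show ?thesis .
qed

lemma tail_step:
  assumes "summable x"
  shows "tail_sum x n = x (Suc n) + tail_sum x (Suc n)"
  using tail_eq[OF assms, of n] tail_eq[OF assms, of "Suc n"] by simp

lemma tail_lim: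
  assumes "summable x"
  shows "tail_sum x \<longlonglongrightarrow> 0"
proof -
  have "(\<lambda>n. \<Sum>i<n. x i) \<longlonglongrightarrow> suminf x" using summable_LIMSEQ[OF assms] .
  then have "(\<lambda>n. \<Sum>i<Suc n. x i) \<longlonglongrightarrow> suminf x" by (rule LIMSEQ_Suc)
  then have "(\<lambda>n. suminf x - (\<Sum>i<Suc n. x i)) \<longlonglongrightarrow> suminf x - suminf x"
    by (intro tendsto_intros)
  moreover have "tail_sum x = (\<lambda>n. suminf x - (\<Sum>i<Suc n. x i))"
    using tail_eq[OF assms] by (intro ext) blast
  ultimately show ?thesis by (simp only:) simp
qed

lemma tail_nonneg:
  assumes "summable x" "\<And>n. x n > 0"
  shows "tail_sum x n \<ge> 0"
  unfolding tail_sum_def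
  using assms summable_ignore_initial_segment[OF assms(1), of "n+1"]
  by (intro suminf_nonneg) (auto intro: less_imp_le)

lemma greedy:
  fixes x :: "nat \<Rightarrow> real"
  assumes pos: "\<And>n. x n > 0" and summ: "summable x"
    and hyp: "\<And>j. j > n \<Longrightarrow> x j \<le> tail_sum x j"
    and t0: "0 \<le> t" and t1: "t \<le> tail_sum x n"
  shows "\<exists>e. (\<forall>i\<le>n. \<not> e i) \<and> (\<lambda>i. if e i then x i else 0) sums t"
proof -
  define ps where "ps = rec_nat (0::real) (\<lambda>i p. p + (if i > n \<and> p + x i \<le> t then x i else 0))"
  have ps0: "ps 0 = 0" and psS: "\<And>i. ps (Suc i) = ps i + (if i > n \<and> ps i + x i \<le> t then x i else 0)"
    unfolding ps_def by simp_all
  define e where "e i = (i > n \<and> ps i + x i \<le> t)" for i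
  have pssum: "ps i = (\<Sum>j<i. if e j then x j else 0)" for i
    by (induction i) (simp_all add: ps0 psS e_def)
  have psle: "ps i \<le> t" for i
    by (induction i) (auto simp: ps0 psS t0)
  have pslow: "ps i = 0" if "i \<le> Suc n" for i
    using that by (induction i) (auto simp: ps0 psS)
  have inv: "t - ps (i + n + 1) \<le> tail_sum x (i + n)" for i
  proof (induction i)
    case 0
    then show ?case using pslow[of "Suc n"] t1 by simp
  next
    case (Suc i)
    define j where "j = Suc i + n"
    have jn: "j > n" unfolding j_def by simp
    have IH: "t - ps j \<le> tail_sum x (i + n)" using Suc unfolding j_def by simp
    have ts: "tail_sum x (i + n) = x j + tail_sum x j"
      using tail_step[OF summ, of "i+n"] unfolding j_def by simp
    show ?case
    proof (cases "ps j + x j \<le> t")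
      case True
      then have "ps (Suc j) = ps j + x j" using psS jn by simp
      then show ?thesis using IH ts unfolding j_def by simp
    next
      case False
      then have "ps (Suc j) = ps j" using psS jn by simp
      then show ?thesis using False hyp[OF jn] unfolding j_def by simp
    qed
  qed
  have "(\<lambda>i. ps (i + n + 1)) \<longlonglongrightarrow> t"
  proof -
    have lim0: "(\<lambda>i. tail_sum x (i + n)) \<longlonglongrightarrow> 0"
      using LIMSEQ_ignore_initial_segment[OF tail_lim[OF summ], of n] by simp
    have "(\<lambda>i. t - ps (i + n + 1)) \<longlonglongrightarrow> 0"
    proof (rule tendsto_sandwich[OF _ _ tendsto_const lim0])
      show "\<forall>\<^sub>F i in sequentially. 0 \<le> t - ps (i + n + 1)" using psle by simp
      show "\<forall>\<^sub>F i in sequentially. t - ps (i + n + 1) \<le> tail_sum x (i + n)" using inv by simp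
    qed
    then have "(\<lambda>i. t - (t - ps (i + n + 1))) \<longlonglongrightarrow> t - 0" by (intro tendsto_intros)
    then show ?thesis by simp
  qed
  then have "ps \<longlonglongrightarrow> t"
    using LIMSEQ_offset[of ps "n+1" t] by (simp add: add.assoc)
  then have "(\<lambda>i. if e i then x i else 0) sums t"
  proof -
    have "(\<lambda>i. \<Sum>j<i. if e j then x j else 0) = ps" using pssum by (intro ext) simp
    then show ?thesis unfolding sums_def using \<open>ps \<longlonglongrightarrow> t\<close> by simp
  qed
  moreover have "\<forall>i\<le>n. \<not> e i" unfolding e_def by simp
  ultimately show ?thesis by blast
qed


lemma sel_summable:
  fixes x :: "nat \<Rightarrow> real"
  assumes pos: "\<And>n. x n > 0" and summ: "summable x"
  shows "summable (\<lambda>i. if e i then x i else 0)"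
  by (rule summable_comparison_test[OF _ summ]) (auto intro: less_imp_le simp: pos intro!: exI[of _ 0])

lemma kakeya:
  fixes x :: "nat \<Rightarrow> real"
  assumes pos: "\<And>n. x n > 0" and summ: "summable x"
    and noninc: "decseq x" and ifill: "interval_filling x"
  shows "x n \<le> tail_sum x n"
proof (rule ccontr)
  assume "\<not> x n \<le> tail_sum x n"
  then have lt: "tail_sum x n < x n" by simp
  define c where "c = (x n + tail_sum x n) / 2"
  have A0: "0 \<in> achievement_set x"
    unfolding achievement_set_def subsum_def
    by (rule CollectI, rule exI[of _ "\<lambda>_. False"]) simp
  have AS: "suminf x \<in> achievement_set x"
    unfolding achievement_set_def subsum_def
    by (rule CollectI, rule exI[of _ "\<lambda>_. True"]) simp
  have tn: "0 \<le> tail_sum x n" using tail_nonneg[OF summ pos] .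
  have xS: "x n \<le> suminf x"
    using sum_le_suminf[OF summ, of "{n}"] pos by (auto intro: less_imp_le)
  have "c \<in> achievement_set x"
  proof -
    have "0 \<le> c" "c \<le> suminf x" using tn xS lt unfolding c_def by auto
    then show ?thesis using ifill A0 AS unfolding interval_filling_def is_interval_1 by blast
  qed
  then obtain e where ce: "c = subsum x e" unfolding achievement_set_def by blast
  define f where "f i = (if e i then x i else 0)" for i
  have sf: "summable f" unfolding f_def using sel_summable[OF pos summ] .
  have fnn: "0 \<le> f i" for i unfolding f_def using pos[of i] by simp
  have cf: "c = suminf f" using ce unfolding subsum_def f_def by simp
  show False
  proof (cases "\<exists>i\<le>n. e i")
    case True
    then obtain i where i: "i \<le> n" "e i" by blast
    have "f i \<le> suminf f" using sum_le_suminf[OF sf, of "{i}"] fnn by auto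
    moreover have "x n \<le> f i" using i noninc unfolding f_def decseq_def by simp
    ultimately show False using cf lt unfolding c_def by simp
  next
    case False
    then have z: "(\<Sum>i<Suc n. f i) = 0" unfolding f_def by simp
    have "suminf f = (\<Sum>j. f (j + Suc n))"
      using suminf_minus_initial_segment[OF sf, of "Suc n"] z by simp
    also have "\<dots> \<le> (\<Sum>j. x (j + Suc n))"
    proof (rule suminf_le)
      show "summable (\<lambda>j. f (j + Suc n))" using summable_ignore_initial_segment[OF sf] .
      show "summable (\<lambda>j. x (j + Suc n))" using summable_ignore_initial_segment[OF summ] .
    qed (auto simp: f_def less_imp_le[OF pos])
    also have "\<dots> = tail_sum x n" unfolding tail_sum_def by simp
    finally show False using cf lt unfolding c_def by simp
  qed
qed


theorem lemma3p7:
  fixes x :: "nat \<Rightarrow> real"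
  assumes pos: "\<And>n. x n > 0"
    and summ: "summable x"
    and noninc: "decseq x"
    and ifill: "interval_filling x"
    and k: "\<exists>k. tail_sum x k > x k"
  shows "\<exists>s \<in> achievement_set x.
           infinite (representations x s) \<or> card (representations x s) \<ge> 3"
proof -
  obtain k where kk: "tail_sum x k > x k" using k by blast
  have kak: "\<And>j. x j \<le> tail_sum x j" using kakeya[OF pos summ noninc ifill] .
  define d where "d = tail_sum x k - x k"
  have d0: "d > 0" using kk unfolding d_def by simp
  have "eventually (\<lambda>m. x m < d) sequentially"
    using order_tendstoD(2)[OF summable_LIMSEQ_zero[OF summ] d0] .
  then obtain M where M: "\<And>m. m \<ge> M \<Longrightarrow> x m < d" unfolding eventually_sequentially by blast
  define m where "m = max M (Suc k)"
  have mk: "m > k" and xm: "x m < d" using M[of m] unfolding m_def by auto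
  define s where "s = x k + x m"
  define e1 where "e1 i = (i = k \<or> i = m)" for i
  obtain g2 where g2: "\<forall>i\<le>m. \<not> g2 i" "(\<lambda>i. if g2 i then x i else 0) sums x m"
    using greedy[OF pos summ, where n=m and t="x m"] pos[of m] kak by (meson less_imp_le)
  define e2 where "e2 i = (i = k \<or> g2 i)" for i
  obtain e3 where e3: "\<forall>i\<le>k. \<not> e3 i" "(\<lambda>i. if e3 i then x i else 0) sums s"
    using greedy[OF pos summ, where n=k and t=s] pos[of m] pos[of k] xm kak unfolding s_def d_def by (smt (verit))
  have s1: "(\<lambda>i. if e1 i then x i else 0) sums s"
  proof -
    have "(\<lambda>i. (if i = k then x i else 0) + (if i = m then x i else 0)) sums (x k + x m)"
      by (intro sums_add sums_single)
    moreover have "(\<lambda>i. (if i = k then x i else 0) + (if i = m then x i else 0)) = (\<lambda>i. if e1 i then x i else 0)"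
      using mk unfolding e1_def by (intro ext) auto
    ultimately show ?thesis unfolding s_def by simp
  qed
  have s2: "(\<lambda>i. if e2 i then x i else 0) sums s"
  proof -
    have "(\<lambda>i. (if i = k then x i else 0) + (if g2 i then x i else 0)) sums (x k + x m)"
      by (intro sums_add sums_single g2(2))
    moreover have "(\<lambda>i. (if i = k then x i else 0) + (if g2 i then x i else 0)) = (\<lambda>i. if e2 i then x i else 0)"
      using mk g2(1) unfolding e2_def by (intro ext) auto
    ultimately show ?thesis unfolding s_def by simp
  qed
  have r1: "e1 \<in> representations x s" using s1 unfolding representations_def subsum_def by (simp add: sums_iff)
  have r2: "e2 \<in> representations x s" using s2 unfolding representations_def subsum_def by (simp add: sums_iff)
  have r3: "e3 \<in> representations x s" using e3(2) unfolding representations_def subsum_def by (simp add: sums_iff)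
  have d12: "e1 \<noteq> e2" using g2(1) mk unfolding e1_def e2_def by (metis less_irrefl order_refl)
  have d13: "e1 \<noteq> e3" using e3(1) unfolding e1_def by auto
  have d23: "e2 \<noteq> e3" using e3(1) unfolding e2_def by auto
  have sub: "{e1, e2, e3} \<subseteq> representations x s" using r1 r2 r3 by blast
  have c3: "card {e1, e2, e3} = 3" using d12 d13 d23 by simp
  have "infinite (representations x s) \<or> card (representations x s) \<ge> 3"
    using card_mono[OF _ sub] c3 by auto
  moreover have "s \<in> achievement_set x" using r1 unfolding achievement_set_def representations_def by blast
  ultimately show ?thesis by blast
qed

end
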